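(* Consider the two-source game ($m=2$) with $n_1\ge n_2\ge 0$, $n_1\ge 1$, and any $\phi>0$, $\mu>0$, $q\in[0,1]$. There exists a (pure) Nash equilibrium in which $u_1>0$ and $u_2=n_2$, where $u_i$ denotes the number of users of $N_i$ choosing the direct path.
   Context: Two-source network: sources $s_1,s_2$ and destination $d$; source $s_i$ has a set $N_i$ of $n_i$ users. Each user generates an independent Poisson flow of packets of rate $\phi>0$; each direct link $(s_i,d)$ has service rate $\mu>0$; the sidelink between $s_1$ and $s_2$ loses packets independently with probability $q$, and $\bar q=1-q$. Only pure strategies are considered: a user of $N_1$ chooses DP $(s_1,d)$ or IP $(s_1,s_2,d)$; a user of $N_2$ chooses DP $(s_2,d)$ or IP $(s_2,s_1,d)$. With $u_i$ users of $N_i$ on DP, $T_1=u_1\phi+(n_2-u_2)\bar q\phi$ and $T_2=u_2\phi+(n_1-u_1)\bar q\phi$. The loss rate of a user of $N_i$ is $\phi\frac{T_i}{T_i+\mu}$ on DP and $\phi\left(q+\bar q\frac{T_j}{T_j+\mu}\right)$ on IP to $s_j$, $j\neq i$. A Nash equilibrium is a pure profile in which no user can strictly decrease its loss rate by unilaterally switching its route. *)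

theory Defs
  imports Complex_Main
begin

text \<open>A pure profile is a pair
  of route choices (s1, s2), s_i k = True meaning user k of N_i takes the direct path (DP),
  False meaning the indirect path (IP) through the other source.\<close>

definition dp_count :: "nat \<Rightarrow> (nat \<Rightarrow> bool) \<Rightarrow> nat" where
  "dp_count n s = card {k. k < n \<and> s k}"

definition load :: "real \<Rightarrow> real \<Rightarrow> nat \<Rightarrow> nat \<Rightarrow> nat \<Rightarrow> real" where
  "load phi q ui nj uj = real ui * phi + (real nj - real uj) * (1 - q) * phi"

definition loss_dp :: "real \<Rightarrow> real \<Rightarrow> real \<Rightarrow> real" where
  "loss_dp phi mu Ti = phi * (Ti / (Ti + mu))"

definition loss_ip :: "real \<Rightarrow> real \<Rightarrow> real \<Rightarrow> real \<Rightarrow> real" where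
  "loss_ip phi mu q Tj = phi * (q + (1 - q) * (Tj / (Tj + mu)))"

definition loss1 :: "real \<Rightarrow> real \<Rightarrow> real \<Rightarrow> nat \<Rightarrow> nat \<Rightarrow> (nat \<Rightarrow> bool) \<Rightarrow> (nat \<Rightarrow> bool) \<Rightarrow> nat \<Rightarrow> real" where
  "loss1 phi mu q n1 n2 s1 s2 k =
     (let u1 = dp_count n1 s1; u2 = dp_count n2 s2;
          T1 = load phi q u1 n2 u2; T2 = load phi q u2 n1 u1
      in if s1 k then loss_dp phi mu T1 else loss_ip phi mu q T2)"

definition loss2 :: "real \<Rightarrow> real \<Rightarrow> real \<Rightarrow> nat \<Rightarrow> nat \<Rightarrow> (nat \<Rightarrow> bool) \<Rightarrow> (nat \<Rightarrow> bool) \<Rightarrow> nat \<Rightarrow> real" where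
  "loss2 phi mu q n1 n2 s1 s2 k =
     (let u1 = dp_count n1 s1; u2 = dp_count n2 s2;
          T1 = load phi q u1 n2 u2; T2 = load phi q u2 n1 u1
      in if s2 k then loss_dp phi mu T2 else loss_ip phi mu q T1)"

definition is_NE :: "real \<Rightarrow> real \<Rightarrow> real \<Rightarrow> nat \<Rightarrow> nat \<Rightarrow> (nat \<Rightarrow> bool) \<Rightarrow> (nat \<Rightarrow> bool) \<Rightarrow> bool" where
  "is_NE phi mu q n1 n2 s1 s2 \<longleftrightarrow>
     (\<forall>k<n1. \<forall>b. \<not> (loss1 phi mu q n1 n2 (s1(k := b)) s2 k < loss1 phi mu q n1 n2 s1 s2 k)) \<and>
     (\<forall>k<n2. \<forall>b. \<not> (loss2 phi mu q n1 n2 s1 (s2(k := b)) k < loss2 phi mu q n1 n2 s1 s2 k))"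

end

theory Submission
  imports Defs
begin

lemma dp_count_set:
  assumes "u \<le> n" shows "dp_count n (\<lambda>k. k < u) = u"
proof -
  have "{k. k < n \<and> k < u} = {..<u}" using assms by auto
  thus ?thesis unfolding dp_count_def by simp
qed

lemma dp_count_all: "dp_count n (\<lambda>k. True) = n"
  unfolding dp_count_def by simp

lemma dp_count_ins:
  assumes "k < n" "\<not> s k" shows "dp_count n (s(k := True)) = Suc (dp_count n s)"
proof -
  have "{j. j < n \<and> (s(k := True)) j} = insert k {j. j < n \<and> s j}" using assms by auto
  thus ?thesis unfolding dp_count_def using assms by simp
qed

lemma dp_count_del:
  assumes "k < n" "s k" shows "dp_count n (s(k := False)) = dp_count n s - 1"
proof -
  have "{j. j < n \<and> (s(k := False)) j} = {j. j < n \<and> s j} - {k}" using assms by auto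
  thus ?thesis unfolding dp_count_def using assms by simp
qed

lemma dp_le_ip:
  assumes "phi > 0" "mu > 0" "T \<ge> 0" "S \<ge> 0" "(1 - q) * (T + mu) \<le> S + mu"
  shows "loss_dp phi mu T \<le> loss_ip phi mu q S"
proof -
  have e1: "loss_dp phi mu T = phi * (1 - mu / (T + mu))"
    unfolding loss_dp_def using assms by (simp add: field_simps)
  have e2: "loss_ip phi mu q S = phi * (1 - (1 - q) * mu / (S + mu))"
    unfolding loss_ip_def using assms by (simp add: field_simps)
  have "(1 - q) * mu / (S + mu) \<le> mu / (T + mu)"
    using assms by (simp add: divide_simps mult.commute mult.left_commute)
  thus ?thesis using e1 e2 assms by simp
qed

lemma ip_le_dp:
  assumes "phi > 0" "mu > 0" "T \<ge> 0" "S \<ge> 0" "S + mu \<le> (1 - q) * (T + mu)"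
  shows "loss_ip phi mu q S \<le> loss_dp phi mu T"
proof -
  have e1: "loss_dp phi mu T = phi * (1 - mu / (T + mu))"
    unfolding loss_dp_def using assms by (simp add: field_simps)
  have e2: "loss_ip phi mu q S = phi * (1 - (1 - q) * mu / (S + mu))"
    unfolding loss_ip_def using assms by (simp add: field_simps)
  have "mu / (T + mu) \<le> (1 - q) * mu / (S + mu)"
    using assms by (simp add: divide_simps mult.commute mult.left_commute)
  thus ?thesis using e1 e2 assms by simp
qed

lemma choose_u:
  fixes P :: "nat \<Rightarrow> bool"
  assumes "P 1" "1 \<le> n"
  shows "\<exists>u. 1 \<le> u \<and> u \<le> n \<and> P u \<and> (u < n \<longrightarrow> \<not> P (u + 1))"
proof -
  let ?A = "{u. 1 \<le> u \<and> u \<le> n \<and> P u}"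
  have fin: "finite ?A" by (rule finite_subset[of _ "{..n}"]) auto
  have ne: "1 \<in> ?A" using assms by auto
  define u where "u = Max ?A"
  have "u \<in> ?A" unfolding u_def using fin ne Max_in by blast
  moreover have "\<And>v. v \<in> ?A \<Longrightarrow> v \<le> u" unfolding u_def using fin by simp
  ultimately show ?thesis
    by (metis (no_types, lifting) Suc_eq_plus1 Suc_leI le_add2 le_trans mem_Collect_eq not_less_eq_eq)
qed

theorem theorem5:
  fixes phi mu q :: real and n1 n2 :: nat
  assumes "n1 \<ge> n2" and "n1 \<ge> 1"
    and "phi > 0" and "mu > 0" and "0 \<le> q" and "q \<le> 1"
  shows "\<exists>s1 s2. is_NE phi mu q n1 n2 s1 s2 \<and> dp_count n1 s1 > 0 \<and> dp_count n2 s2 = n2"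
proof -
  define h where "h = (\<lambda>u::nat. (1 - q) * (real u * phi + mu)
      - (real n2 * phi + (real n1 - real u + 1) * (1 - q) * phi + mu))"
  have h1: "h 1 \<le> 0"
  proof -
    have "(1 - q) * phi * real n1 \<ge> (1 - q) * phi" using assms
      using mult_left_mono[of 1 "real n1" "(1 - q) * phi"] by simp
    moreover have "(1 - q) * mu \<le> mu" using assms by simp
    moreover have "real n2 * phi \<ge> 0" using assms by simp
    ultimately show ?thesis unfolding h_def by (simp add: algebra_simps)
  qed
  obtain u1 where u1: "1 \<le> u1" "u1 \<le> n1" "h u1 \<le> 0" "u1 < n1 \<longrightarrow> \<not> h (u1 + 1) \<le> 0"
    using choose_u[of "\<lambda>u. h u \<le> 0", OF h1 assms(2)] by blast
  define s1 where "s1 = (\<lambda>k::nat. k < u1)"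
  define s2 where "s2 = (\<lambda>k::nat. True)"
  have c1: "dp_count n1 s1 = u1" unfolding s1_def using u1 dp_count_set by simp
  have c2: "dp_count n2 s2 = n2" unfolding s2_def using dp_count_all by simp
  have qb: "0 \<le> 1 - q" "1 - q \<le> 1" using assms by auto
  have A: "\<not> loss1 phi mu q n1 n2 (s1(k := b)) s2 k < loss1 phi mu q n1 n2 s1 s2 k"
    if k: "k < n1" for k b
  proof (cases "b = s1 k")
    case True then show ?thesis by simp
  next
    case False
    show ?thesis
    proof (cases "s1 k")
      case True
      hence b: "b = False" using False by simp
      have cc: "dp_count n1 (s1(k := b)) = u1 - 1" using dp_count_del[of k n1 s1, OF k True] c1 b by simp
      have "loss_dp phi mu (load phi q u1 n2 n2) \<le> loss_ip phi mu q (load phi q n2 n1 (u1 - 1))"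
      proof (rule dp_le_ip)
        show "0 \<le> load phi q u1 n2 n2" unfolding load_def using assms by simp
        show "0 \<le> load phi q n2 n1 (u1 - 1)" unfolding load_def using assms u1 qb by simp
        show "(1 - q) * (load phi q u1 n2 n2 + mu) \<le> load phi q n2 n1 (u1 - 1) + mu"
          using u1(3) u1(1) unfolding load_def h_def by (simp add: of_nat_diff algebra_simps)
      qed (use assms in auto)
      then show ?thesis unfolding loss1_def Let_def using cc c1 c2 b True by simp
    next
      case nk: False
      hence b: "b = True" using False by simp
      have cc: "dp_count n1 (s1(k := b)) = u1 + 1" using dp_count_ins[of k n1 s1, OF k nk] c1 b by simp
      have "u1 < n1" using nk k unfolding s1_def by simp
      hence hh: "h (u1 + 1) > 0" using u1 by simp
      have "loss_ip phi mu q (load phi q n2 n1 u1) \<le> loss_dp phi mu (load phi q (u1 + 1) n2 n2)"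
      proof (rule ip_le_dp)
        show "0 \<le> load phi q (u1 + 1) n2 n2" unfolding load_def using assms by simp
        show "0 \<le> load phi q n2 n1 u1" unfolding load_def using assms u1 qb by simp
        show "load phi q n2 n1 u1 + mu \<le> (1 - q) * (load phi q (u1 + 1) n2 n2 + mu)"
          using hh unfolding load_def h_def by (simp add: algebra_simps)
      qed (use assms in auto)
      then show ?thesis unfolding loss1_def Let_def using cc c1 c2 b nk by simp
    qed
  qed
  have B: "\<not> loss2 phi mu q n1 n2 s1 (s2(k := b)) k < loss2 phi mu q n1 n2 s1 s2 k"
    if k: "k < n2" for k b
  proof (cases b)
    case True
    have "s2(k := b) = s2" unfolding s2_def using True by auto
    then show ?thesis by simp
  next
    case False
    have cc: "dp_count n2 (s2(k := b)) = n2 - 1" using dp_count_del[of k n2 s2, OF k] c2 False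
      unfolding s2_def by simp
    have key: "load phi q n2 n1 u1 + mu \<le> (1 - q) * ((real u1 + 1) * phi + mu) \<or> u1 = n1"
    proof (cases "u1 = n1")
      case False
      hence "h (u1 + 1) > 0" using u1 by simp
      thus ?thesis unfolding h_def load_def by (simp add: algebra_simps)
    qed simp
    have "loss_dp phi mu (load phi q n2 n1 u1) \<le> loss_ip phi mu q (load phi q u1 n2 (n2 - 1))"
    proof (rule dp_le_ip)
      show "0 \<le> load phi q n2 n1 u1" unfolding load_def using assms u1 qb by simp
      show "0 \<le> load phi q u1 n2 (n2 - 1)" unfolding load_def using assms k qb by simp
      have e: "load phi q u1 n2 (n2 - 1) = real u1 * phi + (1 - q) * phi"
        unfolding load_def using k by (simp add: of_nat_diff)
      show "(1 - q) * (load phi q n2 n1 u1 + mu) \<le> load phi q u1 n2 (n2 - 1) + mu"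
        unfolding e
      proof (cases "u1 = n1")
        case True
        have l: "load phi q n2 n1 u1 = real n2 * phi" unfolding load_def True by simp
        have "(1 - q) * (real n2 * phi + mu) \<le> real n2 * phi + mu"
          using qb assms by (simp add: mult_left_le_one_le)
        also have "\<dots> \<le> real u1 * phi + (1 - q) * phi + mu"
        proof -
          have "real n2 * phi \<le> real n1 * phi" using assms by (simp add: mult_right_mono)
          moreover have "0 \<le> (1 - q) * phi" using qb assms by simp
          ultimately show ?thesis using True by simp
        qed
        finally show "(1 - q) * (load phi q n2 n1 u1 + mu) \<le> real u1 * phi + (1 - q) * phi + mu"
          unfolding l .
      next
        case False
        hence kk: "load phi q n2 n1 u1 + mu \<le> (1 - q) * ((real u1 + 1) * phi + mu)" using key by simp
        have "(1 - q) * (load phi q n2 n1 u1 + mu) \<le> (1 - q) * ((1 - q) * ((real u1 + 1) * phi + mu))"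
          using kk qb by (simp add: mult_left_mono)
        also have "\<dots> = (1 - q) * (1 - q) * (real u1 * phi) + (1 - q) * ((1 - q) * phi) + (1 - q) * (1 - q) * mu"
          by (simp add: algebra_simps)
        also have "\<dots> \<le> real u1 * phi + (1 - q) * phi + mu"
        proof -
          have q2: "0 \<le> (1 - q) * (1 - q)" "(1 - q) * (1 - q) \<le> 1" using qb by (auto simp: mult_le_one)
          have "(1 - q) * (1 - q) * (real u1 * phi) \<le> real u1 * phi"
            using q2 assms by (simp add: mult_left_le_one_le)
          moreover have "(1 - q) * ((1 - q) * phi) \<le> (1 - q) * phi"
            using qb assms by (simp add: mult_left_le_one_le)
          moreover have "(1 - q) * (1 - q) * mu \<le> mu"
            using q2 assms by (simp add: mult_left_le_one_le)
          ultimately show ?thesis by linarith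
        qed
        finally show "(1 - q) * (load phi q n2 n1 u1 + mu) \<le> real u1 * phi + (1 - q) * phi + mu" .
      qed
    qed (use assms in auto)
    then show ?thesis unfolding loss2_def Let_def using cc c1 c2 False unfolding s2_def by simp
  qed
  have "is_NE phi mu q n1 n2 s1 s2" unfolding is_NE_def using A B by blast
  moreover have "dp_count n1 s1 > 0" using c1 u1 by simp
  ultimately show ?thesis using c2 by blast
qed

end
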